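(* Consider the SR2 method (described in the context) applied to $\min_x F(x) := f(x) + \mathcal{R}(x)$, and suppose Assumptions (A1), (A3) and (A5) of the context hold. Let $0<\epsilon<1$ and let $t(\epsilon)$ be the first iteration with $\mathbb{E}_{\hat\xi_{t}}[\|s^\xi\|^2]\le\epsilon^2$. If $\mathbb{E}_{\hat\xi_{t(\epsilon)}}[\|\nabla f(x_{t(\epsilon)}) - g^\xi\|^2]\le\epsilon^2$, then $x_{t(\epsilon)}$ is a $\widehat{(\delta,(C+3)\epsilon)}$-stationary point, where $C = 3(L^2+\sigma_{\max}^2)$ and $\delta = \max_{\hat\xi}\|s^\xi\|$.
   Context: Problem: $F(x) = f(x) + \mathcal{R}(x)$ with $f(x) = \frac{1}{N}\sum_{i=1}^N f_i(x)$, $f_i:\mathbb{R}^n\to\mathbb{R}$ differentiable, and $\mathcal{R}:\mathbb{R}^n \to \mathbb{R}\cup\{\pm\infty\}$. For a nonempty sample $\xi \subseteq \{1,\dots,N\}$ set $f(x,\xi) := \frac{1}{|\xi|}\sum_{j\in\xi} f_j(x)$ and $\nabla f(x,\xi) := \frac{1}{|\xi|}\sum_{j\in\xi}\nabla f_j(x)$. A function $\mathcal{R}$ is proper if it never equals $-\infty$ and is finite somewhere; it is prox-bounded if there are $x$ and $\mu>0$ with $\inf_w \{\tfrac{1}{2}\mu^{-1}\|x-w\|^2 + \mathcal{R}(w)\} > -\infty$; the supremum of such $\mu$ is its prox-boundedness threshold. The Fréchet subdifferential $\hat\partial\phi(\bar x)$ of $\phi$ at a point $\bar x$ where $\phi$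 is finite is the set of $v$ with $\liminf_{x\to\bar x, x\ne\bar x} \frac{\phi(x)-\phi(\bar x)-v^T(x-\bar x)}{\|x-\bar x\|}\ge 0$. SR2 algorithm: parameters $0<\eta_1\le\eta_2<1$, $0<\gamma_3\le 1<\gamma_1\le\gamma_2$, a starting point $x_0$ where $\mathcal{R}$ is finite, $\sigma_0 \ge \sigma_{\min} > 0$. At iteration $t$: draw a random sample $\xi_t$, set $g_t := \nabla f(x_t,\xi_t)$, $\psi(s;x_t) := f(x_t,\xi_t) + g_t^T s + \mathcal{R}(x_t+s)$, $m(s;x_t,\sigma_t) := \psi(s;x_t) + \tfrac12\sigma_t\|s\|^2$, and compute $s_t \in \operatorname{argmin}_s m(s;x_t,\sigma_t)$ (if the sample is deemed inadequate, $s_t$ is set to $0$). Compute $\Delta F_t := F(x_t) - F(x_t+s_t)$, $\Delta\psi_t := \psi(0;x_t)-\psi(s_t;x_t)$, $\rho_t := \Delta F_t/\Delta\psi_t$ (with the convention $\rho_t = 0$ when $\Delta\psi_t = +\infty$). If $\rho_t \ge \eta_1$ (a successful iteration) set $x_{t+1} = x_t + s_t$, else $x_{t+1}=x_t$. Then choose $\sigma_{t+1} \in [\max(\sigma_{\min},\gamma_3\sigma_t),\sigma_t]$ if $\rho_t\ge\eta_2$; $\sigma_{t+1}\in[\sigma_t,\gamma_1\sigma_t]$ if $\eta_1\le\rho_t<\eta_2$; $\sigma_{t+1}\in[\gamma_1\sigma_t,\gamma_2\sigma_t]$ if $\rho_t<\eta_1$. Assumptions. (A1): there is $L>0$ with $\|\nabla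 f(x)-\nabla f(y)\|\le L\|x-y\|$ for all $x,y$; $\mathcal{R}$ is proper and lower semicontinuous everywhere, and $s\mapsto\mathcal{R}(x_t+s)$ is prox-bounded, with threshold $\lambda_{x_t}$, for every iterate $x_t$. (A3): there is $\kappa_m>0$ such that for all $t$, $|f(x_t+s_t)-f(x_t)-g_t^Ts_t| \le \kappa_m\|s_t\|^2$; moreover $\mathbb{E}_\xi[f(x_t,\xi)] = f(x_t)$ and $\mathbb{E}_\xi[g_t] = \nabla f(x_t)$. (A5): there is $\lambda>0$ with $\lambda_{x_t}\ge\lambda$ for all iterates $x_t$. Notation: $\sigma_{\max}$ is a constant with $\sigma_t\le\sigma_{\max}$ for all $t$ (e.g. $\max\{\sigma_0,\gamma_2\sigma_{\textup{succ}}\}$ with $\sigma_{\textup{succ}} := \max(2\kappa_m/(1-\eta_2),1/\lambda)$). For a sample $\xi$ drawn at iterate $x$, $g^\xi := \nabla f(x,\xi)$ and $s^\xi$ is the corresponding SR2 step; $\mathbb{E}_{\hat\xi}$ (or $\mathbb{E}_{\hat\xi_t}$ at iterate $x_t$) denotes expectation over the distribution of samples $\xi$ that yield a successful iteration at that iterate, and $\max_{\hat\xi}$ the maximum over such samples. Definition: a point $x$ is $\widehat{(\delta,\epsilon')}$-stationary if $\mathbb{E}_{\hat\xi}\big[\operatorname{dist}(0,\hat\partial F(x+s^\xi))^2\big]\le\epsilon'^2$ with $\delta = \max_{\hat\xi}\|s^\xi\|$. *)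

theory Defs
  imports "HOL-Probability.Probability"
begin

definition fbar :: "(nat \<Rightarrow> 'a \<Rightarrow> real) \<Rightarrow> nat \<Rightarrow> 'a \<Rightarrow> real" where
  "fbar fs N x = (\<Sum>i=1..N. fs i x) / real N"

definition gbar :: "(nat \<Rightarrow> 'a \<Rightarrow> 'a::real_vector) \<Rightarrow> nat \<Rightarrow> 'a \<Rightarrow> 'a" where
  "gbar gs N x = (1 / real N) *\<^sub>R (\<Sum>i=1..N. gs i x)"

definition fsamp :: "(nat \<Rightarrow> 'a \<Rightarrow> real) \<Rightarrow> nat set \<Rightarrow> 'a \<Rightarrow> real" where
  "fsamp fs \<xi> x = (\<Sum>j\<in>\<xi>. fs j x) / real (card \<xi>)"

definition gsamp :: "(nat \<Rightarrow> 'a \<Rightarrow> 'a::real_vector) \<Rightarrow> nat set \<Rightarrow> 'a \<Rightarrow> 'a" where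
  "gsamp gs \<xi> x = (1 / real (card \<xi>)) *\<^sub>R (\<Sum>j\<in>\<xi>. gs j x)"

definition Fobj :: "(nat \<Rightarrow> 'a \<Rightarrow> real) \<Rightarrow> nat \<Rightarrow> ('a \<Rightarrow> ereal) \<Rightarrow> 'a \<Rightarrow> ereal" where
  "Fobj fs N R x = ereal (fbar fs N x) + R x"

definition psi :: "(nat \<Rightarrow> 'a \<Rightarrow> real) \<Rightarrow> (nat \<Rightarrow> 'a \<Rightarrow> 'a::real_inner) \<Rightarrow> ('a \<Rightarrow> ereal)
    \<Rightarrow> nat set \<Rightarrow> 'a \<Rightarrow> 'a \<Rightarrow> ereal" where
  "psi fs gs R \<xi> x s = ereal (fsamp fs \<xi> x + inner (gsamp gs \<xi> x) s) + R (x + s)"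

definition model :: "(nat \<Rightarrow> 'a \<Rightarrow> real) \<Rightarrow> (nat \<Rightarrow> 'a \<Rightarrow> 'a::real_inner) \<Rightarrow> ('a \<Rightarrow> ereal)
    \<Rightarrow> nat set \<Rightarrow> 'a \<Rightarrow> real \<Rightarrow> 'a \<Rightarrow> ereal" where
  "model fs gs R \<xi> x \<sigma> s = psi fs gs R \<xi> x s + ereal (\<sigma> / 2 * (norm s)\<^sup>2)"

definition is_argmin_model :: "(nat \<Rightarrow> 'a \<Rightarrow> real) \<Rightarrow> (nat \<Rightarrow> 'a \<Rightarrow> 'a::real_inner) \<Rightarrow> ('a \<Rightarrow> ereal)
    \<Rightarrow> nat set \<Rightarrow> 'a \<Rightarrow> real \<Rightarrow> 'a \<Rightarrow> bool" where
  "is_argmin_model fs gs R \<xi> x \<sigma> s \<longleftrightarrow>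
     (\<forall>s'. model fs gs R \<xi> x \<sigma> s \<le> model fs gs R \<xi> x \<sigma> s')"

definition rho :: "(nat \<Rightarrow> 'a \<Rightarrow> real) \<Rightarrow> (nat \<Rightarrow> 'a \<Rightarrow> 'a::real_inner) \<Rightarrow> nat \<Rightarrow> ('a \<Rightarrow> ereal)
    \<Rightarrow> nat set \<Rightarrow> 'a \<Rightarrow> 'a \<Rightarrow> real" where
  "rho fs gs N R \<xi> x s =
     (let dF = Fobj fs N R x - Fobj fs N R (x + s);
          dpsi = psi fs gs R \<xi> x 0 - psi fs gs R \<xi> x s
      in if dpsi = \<infinity> then 0 else real_of_ereal dF / real_of_ereal dpsi)"

definition proper_fun :: "('a \<Rightarrow> ereal) \<Rightarrow> bool" where
  "proper_fun R \<longleftrightarrow> (\<forall>x. R x \<noteq> -\<infinity>) \<and> (\<exists>x. R x \<noteq> \<infinity> \<and> R x \<noteq> -\<infinity>)"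

definition lsc_everywhere :: "('a::topological_space \<Rightarrow> ereal) \<Rightarrow> bool" where
  "lsc_everywhere R \<longleftrightarrow> (\<forall>x. R x \<le> Liminf (at x) R)"

definition prox_bdd_with :: "('a::real_normed_vector \<Rightarrow> ereal) \<Rightarrow> real \<Rightarrow> bool" where
  "prox_bdd_with R \<mu> \<longleftrightarrow> \<mu> > 0 \<and>
     (\<exists>x. (INF w. ereal (1 / (2 * \<mu>) * (norm (x - w))\<^sup>2) + R w) > -\<infinity>)"

definition prox_bounded :: "('a::real_normed_vector \<Rightarrow> ereal) \<Rightarrow> bool" where
  "prox_bounded R \<longleftrightarrow> (\<exists>\<mu>. prox_bdd_with R \<mu>)"

definition prox_threshold :: "('a::real_normed_vector \<Rightarrow> ereal) \<Rightarrow> ereal" where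
  "prox_threshold R = Sup (ereal ` {\<mu>. prox_bdd_with R \<mu>})"

definition frechet_subdiff :: "('a::real_inner \<Rightarrow> ereal) \<Rightarrow> 'a \<Rightarrow> 'a set" where
  "frechet_subdiff \<phi> xb =
     {v. \<bar>\<phi> xb\<bar> \<noteq> \<infinity> \<and>
         Liminf (at xb) (\<lambda>x. (\<phi> x - \<phi> xb - ereal (inner v (x - xb))) / ereal (norm (x - xb))) \<ge> 0}"

text \<open>hat-(delta,eps')-stationarity at x w.r.t. the distribution P of successful samples and
  the corresponding steps s. dist(0, empty set) = +infinity is encoded by requiring all
  subdifferentials (for samples in the support) to be nonempty.\<close>
definition hat_stationary :: "('a::euclidean_space \<Rightarrow> ereal) \<Rightarrow> nat set pmf \<Rightarrow> (nat set \<Rightarrow> 'a)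
    \<Rightarrow> 'a \<Rightarrow> real \<Rightarrow> real \<Rightarrow> bool" where
  "hat_stationary F P s x \<delta> \<epsilon>' \<longleftrightarrow>
     \<delta> = Max ((\<lambda>\<xi>. norm (s \<xi>)) ` set_pmf P) \<and>
     (\<forall>\<xi>\<in>set_pmf P. frechet_subdiff F (x + s \<xi>) \<noteq> {}) \<and>
     measure_pmf.expectation P (\<lambda>\<xi>. (infdist 0 (frechet_subdiff F (x + s \<xi>)))\<^sup>2) \<le> \<epsilon>'\<^sup>2"

end

theory Submission
  imports Defs
begin

lemma frechet_argmin:
  fixes f :: "'a::euclidean_space \<Rightarrow> real" and R :: "'a \<Rightarrow> ereal"
  assumes der: "(f has_derivative (\<lambda>h. inner G h)) (at y)"
    and Ry: "\<bar>R y\<bar> \<noteq> \<infinity>"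
    and noninf: "\<And>z. R z \<noteq> -\<infinity>"
    and ineq: "\<And>z. R z \<noteq> \<infinity> \<Longrightarrow>
        real_of_ereal (R z) - real_of_ereal (R y) \<ge> - inner w (z - y) - \<sigma> / 2 * (norm (z - y))\<^sup>2"
  shows "G - w \<in> frechet_subdiff (\<lambda>z. ereal (f z) + R z) y"
proof -
  define h where "h z = (f z - f y - inner G (z - y)) / norm (z - y) - \<sigma> / 2 * norm (z - y)" for z
  have t1: "((\<lambda>z. (f z - f y - inner G (z - y)) / norm (z - y)) \<longlongrightarrow> 0) (at y)"
  proof -
    have "((\<lambda>z. norm ((f z - f y) - inner G (z - y)) / norm (z - y)) \<longlongrightarrow> 0) (at y)"
      using der by (simp add: has_derivative_iff_norm)
    hence "((\<lambda>z. \<bar>(f z - f y - inner G (z - y)) / norm (z - y)\<bar>) \<longlongrightarrow> 0) (at y)"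
      by (simp add: abs_divide)
    thus ?thesis by (rule tendsto_rabs_zero_cancel)
  qed
  have t2: "((\<lambda>z. \<sigma> / 2 * norm (z - y)) \<longlongrightarrow> 0) (at y)"
  proof -
    have "((\<lambda>z. norm (z - y)) \<longlongrightarrow> norm (y - y)) (at y)"
      by (intro tendsto_intros)
    hence "((\<lambda>z. \<sigma> / 2 * norm (z - y)) \<longlongrightarrow> \<sigma> / 2 * 0) (at y)"
      by (intro tendsto_intros) simp
    thus ?thesis by simp
  qed
  have th: "(h \<longlongrightarrow> 0) (at y)"
    unfolding h_def using tendsto_diff[OF t1 t2] by simp
  hence the: "((\<lambda>z. ereal (h z)) \<longlongrightarrow> ereal 0) (at y)"
    by (intro tendsto_intros)
  have L0: "Liminf (at y) (\<lambda>z. ereal (h z)) = 0"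
    using lim_imp_Liminf[OF _ the] by (simp add: zero_ereal_def)
  have ev: "eventually (\<lambda>z. ereal (h z) \<le>
      (ereal (f z) + R z - (ereal (f y) + R y) - ereal (inner (G - w) (z - y))) / ereal (norm (z - y))) (at y)"
    unfolding eventually_at_filter
  proof (intro always_eventually allI impI)
    fix z assume "z \<noteq> y"
    hence d: "norm (z - y) > 0" by simp
    obtain ry where ry: "R y = ereal ry" using Ry by (cases "R y") auto
    show "ereal (h z) \<le>
      (ereal (f z) + R z - (ereal (f y) + R y) - ereal (inner (G - w) (z - y))) / ereal (norm (z - y))"
    proof (cases "R z = \<infinity>")
      case True
      thus ?thesis using ry d by (simp add: ereal_divide)
    next
      case False
      then obtain rz where rz: "R z = ereal rz" using noninf[of z] by (cases "R z") auto
      have i: "rz - ry \<ge> - inner w (z - y) - \<sigma> / 2 * (norm (z - y))\<^sup>2"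
        using ineq[of z] rz ry by simp
      have "h z * norm (z - y) = f z - f y - inner G (z - y) - \<sigma> / 2 * (norm (z - y))\<^sup>2"
        unfolding h_def using d by (simp add: field_simps power2_eq_square)
      also have "\<dots> \<le> f z + rz - (f y + ry) - inner (G - w) (z - y)"
        using i by (simp add: inner_diff_left)
      finally have "h z \<le> (f z + rz - (f y + ry) - inner (G - w) (z - y)) / norm (z - y)"
        using d by (simp add: field_simps)
      thus ?thesis using rz ry d by (simp add: ereal_divide)
    qed
  qed
  have "0 \<le> Liminf (at y)
      (\<lambda>z. (ereal (f z) + R z - (ereal (f y) + R y) - ereal (inner (G - w) (z - y))) / ereal (norm (z - y)))"
    using Liminf_mono[OF ev] L0 by simp
  moreover have "\<bar>ereal (f y) + R y\<bar> \<noteq> \<infinity>" using Ry by (cases "R y") auto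
  ultimately show ?thesis unfolding frechet_subdiff_def by simp
qed

lemma argmin_props:
  fixes R :: "'a::real_inner \<Rightarrow> ereal"
  assumes am: "is_argmin_model fs gs R \<xi> x \<sigma> s"
    and Rx: "\<bar>R x\<bar> \<noteq> \<infinity>"
    and noninf: "\<And>z. R z \<noteq> -\<infinity>"
  shows "\<bar>R (x + s)\<bar> \<noteq> \<infinity>"
    and "\<And>z. R z \<noteq> \<infinity> \<Longrightarrow> real_of_ereal (R z) - real_of_ereal (R (x + s))
           \<ge> - inner (gsamp gs \<xi> x + \<sigma> *\<^sub>R s) (z - (x + s)) - \<sigma> / 2 * (norm (z - (x + s)))\<^sup>2"
proof -
  obtain rx where rx: "R x = ereal rx" using Rx noninf[of x] by (cases "R x") auto
  have m0: "model fs gs R \<xi> x \<sigma> s \<le> model fs gs R \<xi> x \<sigma> 0"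
    using am unfolding is_argmin_model_def by blast
  show fin: "\<bar>R (x + s)\<bar> \<noteq> \<infinity>"
  proof
    assume "\<bar>R (x + s)\<bar> = \<infinity>"
    hence "R (x + s) = \<infinity>" using noninf[of "x + s"] by auto
    thus False using m0 rx unfolding model_def psi_def by simp
  qed
  then obtain ry where ry: "R (x + s) = ereal ry" using noninf[of "x + s"] by (cases "R (x + s)") auto
  fix z assume "R z \<noteq> \<infinity>"
  then obtain rz where rz: "R z = ereal rz" using noninf[of z] by (cases "R z") auto
  have "model fs gs R \<xi> x \<sigma> s \<le> model fs gs R \<xi> x \<sigma> (z - x)"
    using am unfolding is_argmin_model_def by blast
  hence i: "fsamp fs \<xi> x + inner (gsamp gs \<xi> x) s + ry + \<sigma> / 2 * (norm s)\<^sup>2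
      \<le> fsamp fs \<xi> x + inner (gsamp gs \<xi> x) (z - x) + rz + \<sigma> / 2 * (norm (z - x))\<^sup>2"
    unfolding model_def psi_def using ry rz by simp
  define d where "d = z - (x + s)"
  have zx: "z - x = s + d" unfolding d_def by simp
  have n: "(norm (s + d))\<^sup>2 = (norm s)\<^sup>2 + 2 * inner s d + (norm d)\<^sup>2"
    by (simp add: power2_norm_eq_inner inner_add_left inner_add_right inner_commute)
  have "rz - ry \<ge> - inner (gsamp gs \<xi> x + \<sigma> *\<^sub>R s) d - \<sigma> / 2 * (norm d)\<^sup>2"
    using i unfolding zx n by (simp add: inner_add_left inner_add_right algebra_simps)
  thus "real_of_ereal (R z) - real_of_ereal (R (x + s))
           \<ge> - inner (gsamp gs \<xi> x + \<sigma> *\<^sub>R s) (z - (x + s)) - \<sigma> / 2 * (norm (z - (x + s)))\<^sup>2"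
    using rz ry d_def by simp
qed

lemma fbar_deriv:
  fixes fs :: "nat \<Rightarrow> 'a::real_inner \<Rightarrow> real"
  assumes grad: "\<And>i y. (fs i has_derivative (\<lambda>h. inner (gs i y) h)) (at y)"
  shows "(fbar fs N has_derivative (\<lambda>h. inner (gbar gs N y) h)) (at y)"
proof -
  have "((\<lambda>z. (\<Sum>i=1..N. fs i z) / real N) has_derivative (\<lambda>h. (\<Sum>i=1..N. inner (gs i y) h) / real N)) (at y)"
  proof -
    have S: "((\<lambda>z. \<Sum>i=1..N. fs i z) has_derivative (\<lambda>h. \<Sum>i=1..N. inner (gs i y) h)) (at y)"
      by (rule has_derivative_sum, rule grad)
    from has_derivative_mult_right[OF S, of "inverse (real N)"] show ?thesis
      by (simp add: divide_inverse mult.commute)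
  qed
  moreover have "(\<lambda>h. (\<Sum>i=1..N. inner (gs i y) h) / real N) = (\<lambda>h. inner (gbar gs N y) h)"
    by (auto simp: gbar_def inner_sum_left)
  ultimately show ?thesis by (simp add: fbar_def[abs_def])
qed

lemma sq3: "(norm (a + b + c :: 'a::real_normed_vector))\<^sup>2 \<le> 3 * ((norm a)\<^sup>2 + (norm b)\<^sup>2 + (norm c)\<^sup>2)"
proof -
  have "norm (a + b + c) \<le> norm a + norm b + norm c" by (metis add_right_mono norm_triangle_ineq order_trans)
  hence "(norm (a + b + c))\<^sup>2 \<le> (norm a + norm b + norm c)\<^sup>2" by (simp add: power_mono)
  also have "\<dots> \<le> 3 * ((norm a)\<^sup>2 + (norm b)\<^sup>2 + (norm c)\<^sup>2)"
  proof -
    have "0 \<le> (norm a - norm b)\<^sup>2 + (norm b - norm c)\<^sup>2 + (norm a - norm c)\<^sup>2" by simp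
    thus ?thesis by (simp add: power2_eq_square algebra_simps)
  qed
  finally show ?thesis .
qed

theorem corollary1:
  fixes fs :: "nat \<Rightarrow> 'a::euclidean_space \<Rightarrow> real"
    and gs :: "nat \<Rightarrow> 'a \<Rightarrow> 'a"
    and N :: nat
    and R :: "'a \<Rightarrow> ereal"
    and \<eta>\<^sub>1 \<eta>\<^sub>2 \<gamma>\<^sub>1 \<gamma>\<^sub>2 \<gamma>\<^sub>3 \<sigma>min L \<kappa>m lam \<sigma>max \<epsilon> :: real
    and x :: "nat \<Rightarrow> 'a"
    and \<sigma> :: "nat \<Rightarrow> real"
    and D :: "nat \<Rightarrow> nat set pmf"
    and \<xi>s :: "nat \<Rightarrow> nat set"
    and stp :: "nat \<Rightarrow> nat set \<Rightarrow> 'a"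
  defines "succ \<equiv> \<lambda>t. {\<xi>. rho fs gs N R \<xi> (x t) (stp t \<xi>) \<ge> \<eta>\<^sub>1}"
  defines "Phat \<equiv> \<lambda>t. cond_pmf (D t) (succ t)"
  defines "t\<epsilon> \<equiv> (LEAST t. set_pmf (D t) \<inter> succ t \<noteq> {} \<and>
                      measure_pmf.expectation (Phat t) (\<lambda>\<xi>. (norm (stp t \<xi>))\<^sup>2) \<le> \<epsilon>\<^sup>2)"
  defines "C \<equiv> 3 * (L\<^sup>2 + \<sigma>max\<^sup>2)"
  defines "\<delta> \<equiv> Max ((\<lambda>\<xi>. norm (stp t\<epsilon> \<xi>)) ` set_pmf (Phat t\<epsilon>))"
  \<comment> \<open>the problem: f = average of N differentiable components with gradients gs i\<close>
  assumes N_pos: "N \<ge> 1"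
    and grad: "\<And>i y. (fs i has_derivative (\<lambda>h. inner (gs i y) h)) (at y)"
  \<comment> \<open>SR2 parameters\<close>
    and params: "0 < \<eta>\<^sub>1" "\<eta>\<^sub>1 \<le> \<eta>\<^sub>2" "\<eta>\<^sub>2 < 1" "0 < \<gamma>\<^sub>3" "\<gamma>\<^sub>3 \<le> 1" "1 < \<gamma>\<^sub>1" "\<gamma>\<^sub>1 \<le> \<gamma>\<^sub>2"
    and x0: "\<bar>R (x 0)\<bar> \<noteq> \<infinity>"
    and sig0: "0 < \<sigma>min" "\<sigma>min \<le> \<sigma> 0"
  \<comment> \<open>samples: nonempty subsets of {1..N}, drawn from D t at iteration t\<close>
    and samples: "\<And>t. set_pmf (D t) \<subseteq> {\<xi>. \<xi> \<noteq> {} \<and> \<xi> \<subseteq> {1..N}}"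
    and drawn: "\<And>t. \<xi>s t \<in> set_pmf (D t)"
  \<comment> \<open>step: a minimizer of the model, or 0 if the sample is deemed inadequate\<close>
    and step: "\<And>t \<xi>. \<xi> \<in> set_pmf (D t) \<Longrightarrow>
                 stp t \<xi> = 0 \<or> is_argmin_model fs gs R \<xi> (x t) (\<sigma> t) (stp t \<xi>)"
  \<comment> \<open>iterate and regularization parameter updates\<close>
    and x_upd: "\<And>t. x (Suc t) = (if rho fs gs N R (\<xi>s t) (x t) (stp t (\<xi>s t)) \<ge> \<eta>\<^sub>1
                                   then x t + stp t (\<xi>s t) else x t)"
    and sig_upd: "\<And>t. let r = rho fs gs N R (\<xi>s t) (x t) (stp t (\<xi>s t)) in
                    (r \<ge> \<eta>\<^sub>2 \<longrightarrow> max \<sigma>min (\<gamma>\<^sub>3 * \<sigma> t) \<le> \<sigma> (Suc t) \<and> \<sigma> (Suc t) \<le> \<sigma> t) \<and>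
                    (\<eta>\<^sub>1 \<le> r \<and> r < \<eta>\<^sub>2 \<longrightarrow> \<sigma> t \<le> \<sigma> (Suc t) \<and> \<sigma> (Suc t) \<le> \<gamma>\<^sub>1 * \<sigma> t) \<and>
                    (r < \<eta>\<^sub>1 \<longrightarrow> \<gamma>\<^sub>1 * \<sigma> t \<le> \<sigma> (Suc t) \<and> \<sigma> (Suc t) \<le> \<gamma>\<^sub>2 * \<sigma> t)"
  \<comment> \<open>(A1)\<close>
    and L_pos: "L > 0"
    and lipschitz: "\<And>y z. norm (gbar gs N y - gbar gs N z) \<le> L * norm (y - z)"
    and R_proper: "proper_fun R"
    and R_lsc: "lsc_everywhere R"
    and R_prox: "\<And>t. prox_bounded (\<lambda>s. R (x t + s))"
  \<comment> \<open>(A3)\<close>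
    and kappa_pos: "\<kappa>m > 0"
    and A3_model: "\<And>t. \<bar>fbar fs N (x t + stp t (\<xi>s t)) - fbar fs N (x t)
                        - inner (gsamp gs (\<xi>s t) (x t)) (stp t (\<xi>s t))\<bar>
                       \<le> \<kappa>m * (norm (stp t (\<xi>s t)))\<^sup>2"
    and A3_unbiased_f: "\<And>t. measure_pmf.expectation (D t) (\<lambda>\<xi>. fsamp fs \<xi> (x t)) = fbar fs N (x t)"
    and A3_unbiased_g: "\<And>t. measure_pmf.expectation (D t) (\<lambda>\<xi>. gsamp gs \<xi> (x t)) = gbar gs N (x t)"
  \<comment> \<open>(A5)\<close>
    and lambda_pos: "lam > 0"
    and A5: "\<And>t. prox_threshold (\<lambda>s. R (x t + s)) \<ge> ereal lam"
  \<comment> \<open>sigma_max bounds all sigma_t\<close>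
    and sig_max: "\<And>t. \<sigma> t \<le> \<sigma>max"
  \<comment> \<open>epsilon and the first iteration t(epsilon)\<close>
    and eps: "0 < \<epsilon>" "\<epsilon> < 1"
    and t_exists: "\<exists>t. set_pmf (D t) \<inter> succ t \<noteq> {} \<and>
                      measure_pmf.expectation (Phat t) (\<lambda>\<xi>. (norm (stp t \<xi>))\<^sup>2) \<le> \<epsilon>\<^sup>2"
    and grad_err: "measure_pmf.expectation (Phat t\<epsilon>)
                     (\<lambda>\<xi>. (norm (gbar gs N (x t\<epsilon>) - gsamp gs \<xi> (x t\<epsilon>)))\<^sup>2) \<le> \<epsilon>\<^sup>2"
  shows "hat_stationary (Fobj fs N R) (Phat t\<epsilon>) (stp t\<epsilon>) (x t\<epsilon>) \<delta> ((C + 3) * \<epsilon>)"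
proof -
  have noninf: "\<And>z. R z \<noteq> -\<infinity>" using R_proper unfolding proper_fun_def by blast
  have sig_pos: "\<And>t. \<sigma> t > 0"
  proof -
    fix t show "\<sigma> t > 0"
    proof (induction t)
      case 0 thus ?case using sig0 by simp
    next
      case (Suc t)
      show ?case
        using sig_upd[of t] Suc sig0 params
        unfolding Let_def
        by (smt (verit) mult_pos_pos)
    qed
  qed
  have Rfin: "\<And>t. \<bar>R (x t)\<bar> \<noteq> \<infinity>"
  proof -
    fix t show "\<bar>R (x t)\<bar> \<noteq> \<infinity>"
    proof (induction t)
      case 0 thus ?case using x0 by simp
    next
      case (Suc t)
      show ?case
      proof (cases "stp t (\<xi>s t) = 0")
        case True thus ?thesis using Suc x_upd[of t] by simp
      next
        case False
        hence "is_argmin_model fs gs R (\<xi>s t) (x t) (\<sigma> t) (stp t (\<xi>s t))"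
          using step[OF drawn[of t]] by blast
        from argmin_props(1)[OF this Suc noninf] show ?thesis using Suc x_upd[of t] by simp
      qed
    qed
  qed
  have ex: "set_pmf (D t\<epsilon>) \<inter> succ t\<epsilon> \<noteq> {} \<and>
      measure_pmf.expectation (Phat t\<epsilon>) (\<lambda>\<xi>. (norm (stp t\<epsilon> \<xi>))\<^sup>2) \<le> \<epsilon>\<^sup>2"
    unfolding t\<epsilon>_def by (rule LeastI_ex[OF t_exists])
  define P where "P = Phat t\<epsilon>"
  define X where "X = x t\<epsilon>"
  have setP: "set_pmf P = set_pmf (D t\<epsilon>) \<inter> succ t\<epsilon>"
    unfolding P_def Phat_def using set_cond_pmf[of "D t\<epsilon>" "succ t\<epsilon>"] ex by blast
  have finP: "finite (set_pmf P)"
  proof (rule finite_subset)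
    show "set_pmf P \<subseteq> Pow {1..N}" using setP samples[of t\<epsilon>] by auto
  qed simp
  have Fdef: "Fobj fs N R = (\<lambda>z. ereal (fbar fs N z) + R z)"
    by (simp add: Fobj_def[abs_def])
  have sigmax: "(\<sigma> t\<epsilon>)\<^sup>2 \<le> \<sigma>max\<^sup>2"
    using sig_pos[of t\<epsilon>] sig_max[of t\<epsilon>] by (simp add: power_mono)
  have key: "frechet_subdiff (Fobj fs N R) (X + stp t\<epsilon> \<xi>) \<noteq> {} \<and>
      (infdist 0 (frechet_subdiff (Fobj fs N R) (X + stp t\<epsilon> \<xi>)))\<^sup>2
        \<le> C * (norm (stp t\<epsilon> \<xi>))\<^sup>2 + 3 * (norm (gbar gs N X - gsamp gs \<xi> X))\<^sup>2"
    if xi: "\<xi> \<in> set_pmf P" for \<xi>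
  proof -
    define s where "s = stp t\<epsilon> \<xi>"
    have xiD: "\<xi> \<in> set_pmf (D t\<epsilon>)" and xiS: "rho fs gs N R \<xi> X s \<ge> \<eta>\<^sub>1"
      using xi setP unfolding succ_def s_def X_def by auto
    have RX: "\<bar>R X\<bar> \<noteq> \<infinity>" unfolding X_def by (rule Rfin)
    have s0: "s \<noteq> 0"
    proof
      assume "s = 0"
      obtain r where r: "R X = ereal r" using RX noninf[of X] by (cases "R X") auto
      have "rho fs gs N R \<xi> X s = 0"
        unfolding \<open>s = 0\<close> rho_def Let_def Fobj_def psi_def using r by simp
      thus False using xiS params by simp
    qed
    have am: "is_argmin_model fs gs R \<xi> X (\<sigma> t\<epsilon>) s"
      using step[OF xiD] s0 unfolding s_def X_def by blast
    define w where "w = gsamp gs \<xi> X + \<sigma> t\<epsilon> *\<^sub>R s"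
    have vin: "gbar gs N (X + s) - w \<in> frechet_subdiff (Fobj fs N R) (X + s)"
      unfolding Fdef
    proof (rule frechet_argmin[OF fbar_deriv[OF grad]])
      show "\<bar>R (X + s)\<bar> \<noteq> \<infinity>" by (rule argmin_props(1)[OF am RX noninf])
      show "\<And>z. R z \<noteq> - \<infinity>" by (rule noninf)
      show "\<And>z. R z \<noteq> \<infinity> \<Longrightarrow>
         - inner w (z - (X + s)) - \<sigma> t\<epsilon> / 2 * (norm (z - (X + s)))\<^sup>2
         \<le> real_of_ereal (R z) - real_of_ereal (R (X + s))"
        unfolding w_def by (rule argmin_props(2)[OF am RX noninf])
    qed
    have "infdist 0 (frechet_subdiff (Fobj fs N R) (X + s)) \<le> norm (gbar gs N (X + s) - w)"
      using infdist_le[OF vin, of 0] by simp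
    hence "(infdist 0 (frechet_subdiff (Fobj fs N R) (X + s)))\<^sup>2 \<le> (norm (gbar gs N (X + s) - w))\<^sup>2"
      by (simp add: power_mono infdist_nonneg)
    also have "gbar gs N (X + s) - w = (gbar gs N (X + s) - gbar gs N X) + (gbar gs N X - gsamp gs \<xi> X)
        + (- (\<sigma> t\<epsilon> *\<^sub>R s))" unfolding w_def by simp
    also have "(norm \<dots>)\<^sup>2 \<le> 3 * ((norm (gbar gs N (X + s) - gbar gs N X))\<^sup>2
        + (norm (gbar gs N X - gsamp gs \<xi> X))\<^sup>2 + (norm (- (\<sigma> t\<epsilon> *\<^sub>R s)))\<^sup>2)"
      by (rule sq3)
    also have "\<dots> \<le> 3 * (L\<^sup>2 * (norm s)\<^sup>2 + (norm (gbar gs N X - gsamp gs \<xi> X))\<^sup>2 + \<sigma>max\<^sup>2 * (norm s)\<^sup>2)"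
    proof -
      have "norm (gbar gs N (X + s) - gbar gs N X) \<le> L * norm s"
        using lipschitz[of "X + s" X] by simp
      hence a: "(norm (gbar gs N (X + s) - gbar gs N X))\<^sup>2 \<le> L\<^sup>2 * (norm s)\<^sup>2"
        by (metis norm_ge_zero power_mono power_mult_distrib)
      have "(norm (- (\<sigma> t\<epsilon> *\<^sub>R s)))\<^sup>2 = (\<sigma> t\<epsilon>)\<^sup>2 * (norm s)\<^sup>2"
        by (simp add: power_mult_distrib)
      also have "\<dots> \<le> \<sigma>max\<^sup>2 * (norm s)\<^sup>2" using sigmax by (simp add: mult_right_mono)
      finally show ?thesis using a by simp
    qed
    also have "\<dots> = C * (norm s)\<^sup>2 + 3 * (norm (gbar gs N X - gsamp gs \<xi> X))\<^sup>2"
      unfolding C_def by (simp add: algebra_simps)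
    finally show ?thesis using vin unfolding s_def by blast
  qed
  have int: "\<And>f :: nat set \<Rightarrow> real. integrable (measure_pmf P) f"
    by (rule integrable_measure_pmf_finite[OF finP])
  have "measure_pmf.expectation P (\<lambda>\<xi>. (infdist 0 (frechet_subdiff (Fobj fs N R) (X + stp t\<epsilon> \<xi>)))\<^sup>2)
      \<le> measure_pmf.expectation P (\<lambda>\<xi>. C * (norm (stp t\<epsilon> \<xi>))\<^sup>2 + 3 * (norm (gbar gs N X - gsamp gs \<xi> X))\<^sup>2)"
    by (rule integral_mono_AE[OF int int]) (use key in \<open>auto intro!: AE_pmfI\<close>)
  also have "\<dots> = C * measure_pmf.expectation P (\<lambda>\<xi>. (norm (stp t\<epsilon> \<xi>))\<^sup>2)
      + 3 * measure_pmf.expectation P (\<lambda>\<xi>. (norm (gbar gs N X - gsamp gs \<xi> X))\<^sup>2)"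
    using int by simp
  also have "\<dots> \<le> C * \<epsilon>\<^sup>2 + 3 * \<epsilon>\<^sup>2"
  proof -
    have "C \<ge> 0" unfolding C_def by simp
    thus ?thesis using ex grad_err unfolding P_def X_def
      by (intro add_mono mult_left_mono) auto
  qed
  also have "\<dots> \<le> ((C + 3) * \<epsilon>)\<^sup>2"
  proof -
    have "C \<ge> 0" unfolding C_def by simp
    hence "(C + 3) * 1 \<le> (C + 3) * (C + 3)" by (intro mult_left_mono) auto
    hence "(C + 3) * \<epsilon>\<^sup>2 \<le> (C + 3) * (C + 3) * \<epsilon>\<^sup>2" by (simp add: mult_right_mono)
    thus ?thesis by (simp add: power_mult_distrib power2_eq_square algebra_simps)
  qed
  finally have E: "measure_pmf.expectation P (\<lambda>\<xi>. (infdist 0 (frechet_subdiff (Fobj fs N R) (X + stp t\<epsilon> \<xi>)))\<^sup>2)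
      \<le> ((C + 3) * \<epsilon>)\<^sup>2" .
  show ?thesis
    unfolding hat_stationary_def
    using E key unfolding \<delta>_def P_def X_def by blast
qed

end
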